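(* Let $f:\mathbb{R}^n\to\mathbb{R}$ be convex and continuously differentiable, with $|f(x)-f(y)|\le L_0\|x-y\|$ and $\|\nabla f(x)-\nabla f(y)\|\le L_1\|x-y\|$ for all $x,y$. Let $\tilde f(x;\xi)=f(x)[1+\nu(x;\xi)]$, where $\nu$ is i.i.d. (across all evaluations) with $\mathbb{E}[\nu]=0$, variance $\sigma_r^2>0$, $\mathbb{E}[\frac{1}{1+\nu}]\le b$, and support in $[-a,a]$ for some $a<1$. Given $x_k$ with $f(x_k)\neq0$, draw a standard Gaussian $u_k\in\mathbb{R}^n$ independent of the noise, set $\mu_k=\tilde\mu=C_4\sqrt{|\tilde f(x_k;\xi_{k'})|}$ with $C_4=\left[\frac{16\sigma_r^2 n}{L_1^2(1+3\sigma_r^2)(n+6)^3}\right]^{1/4}$, and $$s_{\tilde\mu}=\frac{\tilde f(x_k+\mu_k u_k;\xi_k)-\tilde f(x_k;\xi_{k-1})}{\mu_k}u_k,$$ where the noise in the three evaluations (indexed by $\xi_{k'},\xi_k,\xi_{k-1}$) is independent. Then $$\mathbb{E}[\|s_{\tilde\mu}\|^2]\le 2(n+4)\|\nabla f(x_k)\|^2+C_5|f(x_k)|+C_6,$$ where the expectation is over $u_k,\xi_k,\xi_{k-1},\xi_{k'}$, and $C_5=\tfrac12 C_4^2L_1^2(n+6)^3+(1+b)L_1\sigma_r\sqrt{(1+3\sigma_r^2)n(n+6)^3}$, $C_6=3L_0^2\sigma_r^2(n+4)^2$.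
   Context: $\|\cdot\|$ is the Euclidean norm; "standard Gaussian" means mean $0$ and covariance $I_n$. *)

theory Defs
  imports "HOL-Probability.Probability"
begin

definition std_gaussian :: "('a::euclidean_space) measure" where
  "std_gaussian = density lborel
     (\<lambda>x. ennreal ((2 * pi) powr (- real DIM('a) / 2) * exp (- (norm x)\<^sup>2 / 2)))"

definition noisy :: "('a \<Rightarrow> real) \<Rightarrow> 'a \<Rightarrow> real \<Rightarrow> real" where
  "noisy f x v = f x * (1 + v)"

definition C4 :: "real \<Rightarrow> real \<Rightarrow> real \<Rightarrow> real" where
  "C4 n L1 \<sigma> = (16 * \<sigma>\<^sup>2 * n / (L1\<^sup>2 * (1 + 3 * \<sigma>\<^sup>2) * (n + 6) ^ 3)) powr (1 / 4)"

definition C5 :: "real \<Rightarrow> real \<Rightarrow> real \<Rightarrow> real \<Rightarrow> real" where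
  "C5 n L1 \<sigma> b = 1 / 2 * (C4 n L1 \<sigma>)\<^sup>2 * L1\<^sup>2 * (n + 6) ^ 3
      + (1 + b) * L1 * \<sigma> * sqrt ((1 + 3 * \<sigma>\<^sup>2) * n * (n + 6) ^ 3)"

definition C6 :: "real \<Rightarrow> real \<Rightarrow> real \<Rightarrow> real" where
  "C6 n L0 \<sigma> = 3 * L0\<^sup>2 * \<sigma>\<^sup>2 * (n + 4)\<^sup>2"

text \<open>The zeroth-order estimator s_mu. Arguments: direction u, noise v1 (xi_{k'},
  used for the smoothing radius), v2 (xi_k), v3 (xi_{k-1}).\<close>
definition zo_est :: "real \<Rightarrow> real \<Rightarrow> real \<Rightarrow> ('a::euclidean_space \<Rightarrow> real) \<Rightarrow> 'a \<Rightarrow> 'a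
    \<Rightarrow> real \<Rightarrow> real \<Rightarrow> real \<Rightarrow> 'a" where
  "zo_est n L1 \<sigma> f x u v1 v2 v3 =
     (let \<mu> = C4 n L1 \<sigma> * sqrt \<bar>noisy f x v1\<bar>
      in ((noisy f (x + \<mu> *\<^sub>R u) v2 - noisy f x v3) / \<mu>) *\<^sub>R u)"

end

theory Submission
  imports Defs
begin

lemma taylor_bound:
  fixes f :: "'a::euclidean_space \<Rightarrow> real" and df :: "'a \<Rightarrow> 'a"
  assumes grad: "\<And>y. GDERIV f y :> df y"
    and lip1: "\<And>y z. norm (df y - df z) \<le> L1 * norm (y - z)"
  shows "\<bar>f (x + h) - f x - df x \<bullet> h\<bar> \<le> L1 / 2 * (norm h)\<^sup>2"
proof -
  have d: "((\<lambda>t. f (x + t *\<^sub>R h)) has_real_derivative (h \<bullet> df (x + t *\<^sub>R h))) (at t)" for t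
  proof -
    have "((\<lambda>t. x + t *\<^sub>R h) has_derivative (\<lambda>s. s *\<^sub>R h)) (at t)"
      by (auto intro!: derivative_eq_intros)
    moreover have "(f has_derivative (\<lambda>v. v \<bullet> df (x + t *\<^sub>R h))) (at (x + t *\<^sub>R h))"
      using grad[of "x + t *\<^sub>R h"] unfolding gderiv_def .
    ultimately have "((\<lambda>t. f (x + t *\<^sub>R h)) has_derivative (\<lambda>s. (s *\<^sub>R h) \<bullet> df (x + t *\<^sub>R h))) (at t)"
      by (rule has_derivative_compose)
    moreover have "(\<lambda>s. (s *\<^sub>R h) \<bullet> df (x + t *\<^sub>R h)) = (\<lambda>s. (h \<bullet> df (x + t *\<^sub>R h)) * s)"
      by (auto simp: mult.commute)
    ultimately show ?thesis unfolding has_field_derivative_def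
      by simp
  qed
  have key: "\<bar>h \<bullet> df (x + t *\<^sub>R h) - df x \<bullet> h\<bar> \<le> L1 * t * (norm h)\<^sup>2" if "0 \<le> t" for t
  proof -
    have "\<bar>h \<bullet> df (x + t *\<^sub>R h) - df x \<bullet> h\<bar> = \<bar>(df (x + t *\<^sub>R h) - df x) \<bullet> h\<bar>"
      by (simp add: inner_diff_left inner_diff_right inner_commute)
    also have "\<dots> \<le> norm (df (x + t *\<^sub>R h) - df x) * norm h" by (rule Cauchy_Schwarz_ineq2)
    also have "\<dots> \<le> L1 * norm (t *\<^sub>R h) * norm h"
      using lip1[of "x + t *\<^sub>R h" x] by (intro mult_right_mono) auto
    finally show ?thesis using that by (simp add: power2_eq_square)
  qed
  have up: "f (x + 1 *\<^sub>R h) - 1 * (df x \<bullet> h) - L1/2 * 1\<^sup>2 * (norm h)\<^sup>2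
      \<le> f (x + 0 *\<^sub>R h) - 0 * (df x \<bullet> h) - L1/2 * 0\<^sup>2 * (norm h)\<^sup>2"
  proof (rule DERIV_nonpos_imp_nonincreasing[where f = "\<lambda>t. f (x + t *\<^sub>R h) - t * (df x \<bullet> h) - L1/2 * t\<^sup>2 * (norm h)\<^sup>2"])
    fix t :: real assume t: "0 \<le> t" "t \<le> 1"
    show "\<exists>y. ((\<lambda>t. f (x + t *\<^sub>R h) - t * (df x \<bullet> h) - L1/2 * t\<^sup>2 * (norm h)\<^sup>2) has_real_derivative y) (at t) \<and> y \<le> 0"
      apply (rule exI, rule conjI)
       apply (rule derivative_eq_intros d refl)+
      using key[OF t(1)] by (simp add: abs_le_iff mult.commute mult.left_commute)
  qed simp
  have lo: "f (x + 0 *\<^sub>R h) - 0 * (df x \<bullet> h) + L1/2 * 0\<^sup>2 * (norm h)\<^sup>2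
      \<le> f (x + 1 *\<^sub>R h) - 1 * (df x \<bullet> h) + L1/2 * 1\<^sup>2 * (norm h)\<^sup>2"
  proof (rule DERIV_nonneg_imp_nondecreasing[where f = "\<lambda>t. f (x + t *\<^sub>R h) - t * (df x \<bullet> h) + L1/2 * t\<^sup>2 * (norm h)\<^sup>2"])
    fix t :: real assume t: "0 \<le> t" "t \<le> 1"
    show "\<exists>y. ((\<lambda>t. f (x + t *\<^sub>R h) - t * (df x \<bullet> h) + L1/2 * t\<^sup>2 * (norm h)\<^sup>2) has_real_derivative y) (at t) \<and> y \<ge> 0"
      apply (rule exI, rule conjI)
       apply (rule derivative_eq_intros d refl)+
      using key[OF t(1)] by (simp add: abs_le_iff mult.commute mult.left_commute)
  qed simp
  from up lo have "f (x+h) - f x - df x \<bullet> h \<le> L1/2*(norm h)\<^sup>2"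
      "-(f (x+h) - f x - df x \<bullet> h) \<le> L1/2*(norm h)\<^sup>2" by simp_all
  then show ?thesis by (simp only: abs_le_iff)
qed

lemma mom1:
  assumes "0 \<le> a" "0 \<le> b" "0 \<le> c" "0 \<le> d"
  shows "(\<integral>\<^sup>+ y. ennreal (std_normal_density y * (a*y^6 + b*y^4 + c*y^2 + d)) \<partial>lborel)
      = ennreal (15*a + 3*b + c + d)"
proof -
  have m: "has_bochner_integral lborel (\<lambda>y. std_normal_density y * y ^ (2 * k)) (fact (2 * k) / (2^k * fact k))" for k
    by (rule std_normal_moment_even)
  have m3: "has_bochner_integral lborel (\<lambda>y. std_normal_density y * y ^ 6) 15"
    using m[of 3] by (simp add: fact_numeral)
  have m2: "has_bochner_integral lborel (\<lambda>y. std_normal_density y * y ^ 4) 3"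
    using m[of 2] by (simp add: fact_numeral)
  have m1: "has_bochner_integral lborel (\<lambda>y. std_normal_density y * y ^ 2) 1"
    using m[of 1] by (simp add: fact_numeral)
  have m0: "has_bochner_integral lborel (\<lambda>y. std_normal_density y) 1"
    using m[of 0] by simp
  have hb: "has_bochner_integral lborel (\<lambda>y. std_normal_density y * (a*y^6 + b*y^4 + c*y^2 + d))
      (a * 15 + b * 3 + c * 1 + d * 1)"
  proof -
    have e: "(\<lambda>y. std_normal_density y * (a*y^6 + b*y^4 + c*y^2 + d)) =
      (\<lambda>y. a * (std_normal_density y * y^6) + b * (std_normal_density y * y^4)
         + c * (std_normal_density y * y^2) + d * std_normal_density y)"
      by (auto simp: algebra_simps)
    show ?thesis unfolding e
      by (intro has_bochner_integral_add has_bochner_integral_mult_right m3 m2 m1 m0)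
  qed
  have "(\<integral>\<^sup>+ y. ennreal (std_normal_density y * (a*y^6 + b*y^4 + c*y^2 + d)) \<partial>lborel)
     = ennreal (integral\<^sup>L lborel (\<lambda>y. std_normal_density y * (a*y^6 + b*y^4 + c*y^2 + d)))"
    using hb assms by (intro nn_integral_eq_integral) (auto simp: has_bochner_integral_iff intro!: mult_nonneg_nonneg add_nonneg_nonneg)
  also have "\<dots> = ennreal (15*a + 3*b + c + d)"
    using hb by (simp add: has_bochner_integral_integral_eq mult.commute)
  finally show ?thesis .
qed

lemma nn_integral_reflect:
  fixes F :: "real \<Rightarrow> ennreal"
  assumes [measurable]: "F \<in> borel_measurable borel"
  shows "(\<integral>\<^sup>+ y. F y \<partial>lborel) = (\<integral>\<^sup>+ y. F (- y) \<partial>lborel)"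
  using nn_integral_real_affine[OF assms, of "-1" 0] by simp

lemma mom_sym:
  assumes "0 \<le> p" "0 \<le> q"
  shows "(\<integral>\<^sup>+ y. ennreal (std_normal_density y * ((a*y + c)\<^sup>2 * (p*y\<^sup>2 + q))) \<partial>lborel)
      = ennreal (3*a\<^sup>2*p + a\<^sup>2*q + c\<^sup>2*p + c\<^sup>2*q)"
proof -
  let ?F = "\<lambda>y. ennreal (std_normal_density y * ((a*y + c)\<^sup>2 * (p*y\<^sup>2 + q)))"
  let ?X = "\<integral>\<^sup>+ y. ?F y \<partial>lborel"
  have sym: "?X = (\<integral>\<^sup>+ y. ?F (-y) \<partial>lborel)"
    by (rule nn_integral_reflect) measurable
  have nd: "std_normal_density (-y) = std_normal_density y" for y
    by (simp add: std_normal_density_def)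
  have "?X + ?X = ?X + (\<integral>\<^sup>+ y. ?F (-y) \<partial>lborel)"
    using sym by simp
  also have "\<dots> = (\<integral>\<^sup>+ y. ?F y + ?F (-y) \<partial>lborel)"
    by (rule nn_integral_add[symmetric]) measurable
  also have "\<dots> = (\<integral>\<^sup>+ y. ennreal (std_normal_density y * (0*y^6 + (2*a\<^sup>2*p)*y^4 + (2*(a\<^sup>2*q + c\<^sup>2*p))*y^2 + 2*c\<^sup>2*q)) \<partial>lborel)"
  proof (rule nn_integral_cong)
    fix y :: real
    have pos: "0 \<le> std_normal_density y" by (rule normal_density_nonneg)
    have h1: "0 \<le> std_normal_density y * ((a*y + c)\<^sup>2 * (p*y\<^sup>2 + q))"
      using pos assms by (intro mult_nonneg_nonneg add_nonneg_nonneg) auto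
    have h2: "0 \<le> std_normal_density y * ((a*(-y) + c)\<^sup>2 * (p*(-y)\<^sup>2 + q))"
      using pos assms by (intro mult_nonneg_nonneg add_nonneg_nonneg) auto
    have e: "std_normal_density y * ((a*y + c)\<^sup>2 * (p*y\<^sup>2 + q)) + std_normal_density y * ((a*(-y) + c)\<^sup>2 * (p*(-y)\<^sup>2 + q))
      = std_normal_density y * (0*y^6 + (2*a\<^sup>2*p)*y^4 + (2*(a\<^sup>2*q + c\<^sup>2*p))*y^2 + 2*c\<^sup>2*q)"
      by (simp add: algebra_simps power2_eq_square eval_nat_numeral)
    show "?F y + ?F (-y) = ennreal (std_normal_density y * (0*y^6 + (2*a\<^sup>2*p)*y^4 + (2*(a\<^sup>2*q + c\<^sup>2*p))*y^2 + 2*c\<^sup>2*q))"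
      unfolding nd e[symmetric] using ennreal_plus[OF h1 h2] by simp
  qed
  also have "\<dots> = ennreal (15*0 + 3*(2*a\<^sup>2*p) + 2*(a\<^sup>2*q + c\<^sup>2*p) + 2*c\<^sup>2*q)"
    using assms by (intro mom1) auto
  also have "\<dots> = ennreal (3*a\<^sup>2*p + a\<^sup>2*q + c\<^sup>2*p + c\<^sup>2*q) + ennreal (3*a\<^sup>2*p + a\<^sup>2*q + c\<^sup>2*p + c\<^sup>2*q)"
  proof -
    have V: "0 \<le> 3*a\<^sup>2*p + a\<^sup>2*q + c\<^sup>2*p + c\<^sup>2*q" using assms by (intro add_nonneg_nonneg mult_nonneg_nonneg) auto
    have "ennreal (15*0 + 3*(2*a\<^sup>2*p) + 2*(a\<^sup>2*q + c\<^sup>2*p) + 2*c\<^sup>2*q) = ennreal ((3*a\<^sup>2*p + a\<^sup>2*q + c\<^sup>2*p + c\<^sup>2*q) + (3*a\<^sup>2*p + a\<^sup>2*q + c\<^sup>2*p + c\<^sup>2*q))"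
      by (rule arg_cong[where f=ennreal]) (simp add: algebra_simps)
    also have "\<dots> = ennreal (3*a\<^sup>2*p + a\<^sup>2*q + c\<^sup>2*p + c\<^sup>2*q) + ennreal (3*a\<^sup>2*p + a\<^sup>2*q + c\<^sup>2*p + c\<^sup>2*q)"
      using V V by (rule ennreal_plus)
    finally show ?thesis .
  qed
  finally have "?X + ?X = ennreal (3*a\<^sup>2*p + a\<^sup>2*q + c\<^sup>2*p + c\<^sup>2*q) + ennreal (3*a\<^sup>2*p + a\<^sup>2*q + c\<^sup>2*p + c\<^sup>2*q)" .
  then have "2 * ?X = 2 * ennreal (3*a\<^sup>2*p + a\<^sup>2*q + c\<^sup>2*p + c\<^sup>2*q)"
    by (simp add: mult_2)
  then show ?thesis by (simp add: ennreal_mult_cancel_left)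
qed

definition gp :: "'b set \<Rightarrow> ('b \<Rightarrow> real) \<Rightarrow> real" where
  "gp I z = (\<Prod>b\<in>I. std_normal_density (z b))"

definition EI :: "'b set \<Rightarrow> (('b \<Rightarrow> real) \<Rightarrow> real) \<Rightarrow> ennreal" where
  "EI I h = (\<integral>\<^sup>+z. ennreal (gp I z * h z) \<partial>(Pi\<^sub>M I (\<lambda>_. lborel)))"

lemma gp_nonneg: "0 \<le> gp I z"
  unfolding gp_def by (intro prod_nonneg) (auto simp: normal_density_nonneg)

lemma gp_meas[measurable]: "gp I \<in> borel_measurable (Pi\<^sub>M I (\<lambda>_. lborel))"
  unfolding gp_def by measurable

lemma S_meas[measurable]: "(\<lambda>z::'b \<Rightarrow> real. \<Sum>b\<in>I. (z b)\<^sup>2) \<in> borel_measurable (Pi\<^sub>M I (\<lambda>_. lborel))"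
  by measurable

lemma Y_meas[measurable]: "(\<lambda>z::'b \<Rightarrow> real. \<Sum>b\<in>I. w b * z b) \<in> borel_measurable (Pi\<^sub>M I (\<lambda>_. lborel))"
  by measurable

lemma psf: "product_sigma_finite (\<lambda>_::'b. lborel :: real measure)"
  by (simp add: product_sigma_finite_def lborel.sigma_finite_measure_axioms)

lemma EI_add:
  assumes [measurable]: "h1 \<in> borel_measurable (Pi\<^sub>M I (\<lambda>_. lborel))" "h2 \<in> borel_measurable (Pi\<^sub>M I (\<lambda>_. lborel))"
    and "\<And>z. 0 \<le> h1 z" "\<And>z. 0 \<le> h2 z"
  shows "EI I (\<lambda>z. h1 z + h2 z) = EI I h1 + EI I h2"
  unfolding EI_def
  apply (subst nn_integral_add[symmetric])
    apply measurable
  apply (rule nn_integral_cong)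
  using assms(3,4) gp_nonneg
  by (subst distrib_left, subst ennreal_plus) (auto intro: mult_nonneg_nonneg)

lemma EI_cmult:
  assumes [measurable]: "h \<in> borel_measurable (Pi\<^sub>M I (\<lambda>_. lborel))"
    and "0 \<le> c" "\<And>z. 0 \<le> h z"
  shows "EI I (\<lambda>z. c * h z) = ennreal c * EI I h"
  unfolding EI_def
  apply (subst nn_integral_cmult[symmetric])
   apply measurable
  apply (rule nn_integral_cong)
  using assms(2,3) gp_nonneg
  by (subst ennreal_mult[symmetric]) (auto simp: mult_ac intro: mult_nonneg_nonneg)

lemma EI_const: "finite I \<Longrightarrow> EI I (\<lambda>_. 1) = 1"
proof -
  assume "finite I"
  interpret product_sigma_finite "\<lambda>_::'a. lborel :: real measure" by (rule psf)
  have "EI I (\<lambda>_. 1) = (\<integral>\<^sup>+z. (\<Prod>b\<in>I. ennreal (std_normal_density (z b))) \<partial>(Pi\<^sub>M I (\<lambda>_. lborel)))"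
    unfolding EI_def gp_def by (simp add: prod_ennreal normal_density_nonneg)
  also have "\<dots> = (\<Prod>b\<in>I. \<integral>\<^sup>+y. ennreal (std_normal_density y) \<partial>lborel)"
    using \<open>finite I\<close> by (intro product_nn_integral_prod) auto
  also have "\<dots> = 1"
    using mom1[of 0 0 0 1] by simp
  finally show ?thesis .
qed

lemma EI_insert:
  assumes I: "finite I" "i \<notin> I"
    and [measurable]: "h \<in> borel_measurable (Pi\<^sub>M (insert i I) (\<lambda>_. lborel))"
  shows "EI (insert i I) h = (\<integral>\<^sup>+z. ennreal (gp I z) *
      (\<integral>\<^sup>+y. ennreal (std_normal_density y * h (z(i := y))) \<partial>lborel) \<partial>(Pi\<^sub>M I (\<lambda>_. lborel)))"
proof -
  interpret product_sigma_finite "\<lambda>_::'a. lborel :: real measure" by (rule psf)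
  have "EI (insert i I) h = (\<integral>\<^sup>+z. (\<integral>\<^sup>+y. ennreal (gp (insert i I) (z(i := y)) * h (z(i := y))) \<partial>lborel) \<partial>(Pi\<^sub>M I (\<lambda>_. lborel)))"
    unfolding EI_def by (rule product_nn_integral_insert[OF I]) measurable
  also have "\<dots> = (\<integral>\<^sup>+z. ennreal (gp I z) *
      (\<integral>\<^sup>+y. ennreal (std_normal_density y * h (z(i := y))) \<partial>lborel) \<partial>(Pi\<^sub>M I (\<lambda>_. lborel)))"
  proof (rule nn_integral_cong)
    fix z :: "'a \<Rightarrow> real"
    assume zs: "z \<in> space (Pi\<^sub>M I (\<lambda>_. lborel))"
    have [measurable]: "(\<lambda>y. h (z(i:=y))) \<in> borel_measurable lborel"
      using measurable_comp[OF measurable_component_update[OF zs I(2)] assms(3)] by (simp add: comp_def)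
    have g: "gp (insert i I) (z(i := y)) = std_normal_density y * gp I z" for y
      unfolding gp_def using I by (auto intro!: prod.cong)
    have "(\<integral>\<^sup>+y. ennreal (gp (insert i I) (z(i := y)) * h (z(i := y))) \<partial>lborel)
        = (\<integral>\<^sup>+y. ennreal (gp I z) * ennreal (std_normal_density y * h (z(i := y))) \<partial>lborel)"
    proof (rule nn_integral_cong)
      fix y
      show "ennreal (gp (insert i I) (z(i := y)) * h (z(i := y))) = ennreal (gp I z) * ennreal (std_normal_density y * h (z(i := y)))"
        unfolding g using gp_nonneg[of I z] by (simp add: ennreal_mult'[symmetric] mult_ac)
    qed
    also have "\<dots> = ennreal (gp I z) * (\<integral>\<^sup>+y. ennreal (std_normal_density y * h (z(i := y))) \<partial>lborel)"
      by (rule nn_integral_cmult) measurable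
    finally show "(\<integral>\<^sup>+y. ennreal (gp (insert i I) (z(i := y)) * h (z(i := y))) \<partial>lborel) = ennreal (gp I z) *
      (\<integral>\<^sup>+y. ennreal (std_normal_density y * h (z(i := y))) \<partial>lborel)" .
  qed
  finally show ?thesis .
qed

definition SS :: "'b set \<Rightarrow> ('b \<Rightarrow> real) \<Rightarrow> real" where
  "SS I z = (\<Sum>b\<in>I. (z b)\<^sup>2)"
definition YY :: "('b \<Rightarrow> real) \<Rightarrow> 'b set \<Rightarrow> ('b \<Rightarrow> real) \<Rightarrow> real" where
  "YY w I z = (\<Sum>b\<in>I. w b * z b)"

lemma SS_meas[measurable]: "SS I \<in> borel_measurable (Pi\<^sub>M I (\<lambda>_. lborel))"
  unfolding SS_def by measurable
lemma YY_meas[measurable]: "YY w I \<in> borel_measurable (Pi\<^sub>M I (\<lambda>_. lborel))"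
  unfolding YY_def by measurable
lemma SS_nonneg: "0 \<le> SS I z" unfolding SS_def by (auto intro: sum_nonneg)

lemma SS_upd: "finite I \<Longrightarrow> i \<notin> I \<Longrightarrow> SS (insert i I) (z(i := y)) = y\<^sup>2 + SS I z"
  unfolding SS_def by (auto intro!: sum.cong)
lemma YY_upd: "finite I \<Longrightarrow> i \<notin> I \<Longrightarrow> YY w (insert i I) (z(i := y)) = w i * y + YY w I z"
  unfolding YY_def by (auto intro!: sum.cong)

lemma EI_insert2:
  assumes I: "finite I" "i \<notin> I"
    and [measurable]: "h \<in> borel_measurable (Pi\<^sub>M (insert i I) (\<lambda>_. lborel))"
    and k: "\<And>z. (\<integral>\<^sup>+y. ennreal (std_normal_density y * h (z(i := y))) \<partial>lborel) = ennreal (k z)"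
    and kp: "\<And>z. 0 \<le> k z"
  shows "EI (insert i I) h = EI I k"
  apply (subst EI_insert[OF assms(1-3)])
  apply (subst k)
  unfolding EI_def
  by (rule nn_integral_cong) (simp add: ennreal_mult[symmetric] gp_nonneg kp)

lemma EI_lin4:
  assumes [measurable]: "h1 \<in> borel_measurable (Pi\<^sub>M I (\<lambda>_. lborel))" "h2 \<in> borel_measurable (Pi\<^sub>M I (\<lambda>_. lborel))"
    "h3 \<in> borel_measurable (Pi\<^sub>M I (\<lambda>_. lborel))" "h4 \<in> borel_measurable (Pi\<^sub>M I (\<lambda>_. lborel))"
    and hp: "\<And>z. 0 \<le> h1 z" "\<And>z. 0 \<le> h2 z" "\<And>z. 0 \<le> h3 z" "\<And>z. 0 \<le> h4 z"
    and cp: "0 \<le> a" "0 \<le> b" "0 \<le> c" "0 \<le> d"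
    and v: "EI I h1 = ennreal x1" "EI I h2 = ennreal x2" "EI I h3 = ennreal x3" "EI I h4 = ennreal x4"
    and xp: "0 \<le> x1" "0 \<le> x2" "0 \<le> x3" "0 \<le> x4"
  shows "EI I (\<lambda>z. a * h1 z + b * h2 z + c * h3 z + d * h4 z) = ennreal (a*x1 + b*x2 + c*x3 + d*x4)"
proof -
  have "EI I (\<lambda>z. a * h1 z + b * h2 z + c * h3 z + d * h4 z)
     = EI I (\<lambda>z. a * h1 z) + EI I (\<lambda>z. b * h2 z) + EI I (\<lambda>z. c * h3 z) + EI I (\<lambda>z. d * h4 z)"
    using hp cp
    by (simp add: EI_add add_nonneg_nonneg mult_nonneg_nonneg)
  also have "\<dots> = ennreal a * ennreal x1 + ennreal b * ennreal x2 + ennreal c * ennreal x3 + ennreal d * ennreal x4"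
    using hp cp by (simp add: EI_cmult v)
  also have "\<dots> = ennreal (a*x1 + b*x2 + c*x3 + d*x4)"
    using cp xp by (simp add: ennreal_mult[symmetric] ennreal_plus[symmetric] add_nonneg_nonneg mult_nonneg_nonneg del: ennreal_plus)
  finally show ?thesis .
qed

lemma EI_S1: "finite I \<Longrightarrow> EI I (SS I) = ennreal (card I)"
proof (induction I rule: finite_induct)
  case empty then show ?case by (simp add: SS_def EI_def)
next
  case (insert i I)
  have "EI (insert i I) (SS (insert i I)) = EI I (\<lambda>z. 1 * 1 + 1 * SS I z + 0 * 1 + 0 * 1)"
  proof (rule EI_insert2[OF insert(1,2)])
    fix z
    show "(\<integral>\<^sup>+y. ennreal (std_normal_density y * SS (insert i I) (z(i := y))) \<partial>lborel) = ennreal (1 * 1 + 1 * SS I z + 0 * 1 + 0 * 1)"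
      using mom1[of 0 0 1 "SS I z"] SS_nonneg[of I z] by (simp add: SS_upd insert(1,2) add.commute)
  qed (auto simp: SS_nonneg)
  also have "\<dots> = ennreal (1 * 1 + 1 * real (card I) + 0 * 1 + 0 * 1)"
    by (rule EI_lin4) (auto simp: SS_nonneg EI_const insert)
  finally show ?case using insert by simp
qed

lemma EI_S2: "finite I \<Longrightarrow> EI I (\<lambda>z. (SS I z)^2) = ennreal (real (card I) * (real (card I) + 2))"
proof (induction I rule: finite_induct)
  case empty then show ?case by (simp add: SS_def EI_def)
next
  case (insert i I)
  have "EI (insert i I) (\<lambda>z. (SS (insert i I) z)^2) = EI I (\<lambda>z. 3 * 1 + 2 * SS I z + 1 * (SS I z)^2 + 0 * 1)"
  proof (rule EI_insert2[OF insert(1,2)])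
    fix z
    have e: "(SS (insert i I) (z(i:=y)))^2 = 0*y^6 + 1*y^4 + (2*SS I z)*y^2 + (SS I z)^2" for y
      using insert(1,2) by (simp add: SS_upd power2_eq_square algebra_simps eval_nat_numeral)
    show "(\<integral>\<^sup>+y. ennreal (std_normal_density y * (SS (insert i I) (z(i := y)))^2) \<partial>lborel) = ennreal (3 * 1 + 2 * SS I z + 1 * (SS I z)^2 + 0 * 1)"
      unfolding e using mom1[of 0 1 "2*SS I z" "(SS I z)^2"] SS_nonneg[of I z] by simp
  qed (auto simp: SS_nonneg)
  also have "\<dots> = ennreal (3 * 1 + 2 * real (card I) + 1 * (real (card I) * (real (card I) + 2)) + 0 * 1)"
    by (rule EI_lin4) (auto simp: SS_nonneg EI_const EI_S1 insert)
  finally show ?case using insert by (simp add: algebra_simps)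
qed

lemma EI_S3: "finite I \<Longrightarrow> EI I (\<lambda>z. (SS I z)^3) = ennreal (real (card I) * (real (card I) + 2) * (real (card I) + 4))"
proof (induction I rule: finite_induct)
  case empty then show ?case by (simp add: SS_def EI_def)
next
  case (insert i I)
  have "EI (insert i I) (\<lambda>z. (SS (insert i I) z)^3) = EI I (\<lambda>z. 15 * 1 + 9 * SS I z + 3 * (SS I z)^2 + 1 * (SS I z)^3)"
  proof (rule EI_insert2[OF insert(1,2)])
    fix z
    have e: "(SS (insert i I) (z(i:=y)))^3 = 1*y^6 + (3*SS I z)*y^4 + (3*(SS I z)^2)*y^2 + (SS I z)^3" for y
      using insert(1,2) by (simp add: SS_upd power2_eq_square algebra_simps eval_nat_numeral)
    show "(\<integral>\<^sup>+y. ennreal (std_normal_density y * (SS (insert i I) (z(i := y)))^3) \<partial>lborel) = ennreal (15 * 1 + 9 * SS I z + 3 * (SS I z)^2 + 1 * (SS I z)^3)"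
      unfolding e using mom1[of 1 "3*SS I z" "3*(SS I z)^2" "(SS I z)^3"] SS_nonneg[of I z] by simp
  qed (auto simp: SS_nonneg)
  also have "\<dots> = ennreal (15 * 1 + 9 * real (card I) + 3 * (real (card I) * (real (card I) + 2)) + 1 * (real (card I) * (real (card I) + 2) * (real (card I) + 4)))"
    by (rule EI_lin4) (auto simp: SS_nonneg EI_const EI_S1 EI_S2 insert)
  finally show ?case using insert by (simp add: algebra_simps)
qed

lemma EI_Y2: "finite I \<Longrightarrow> EI I (\<lambda>z. (YY w I z)^2) = ennreal (\<Sum>b\<in>I. (w b)^2)"
proof (induction I rule: finite_induct)
  case empty then show ?case by (simp add: YY_def EI_def)
next
  case (insert i I)
  have "EI (insert i I) (\<lambda>z. (YY w (insert i I) z)^2) = EI I (\<lambda>z. (w i)^2 * 1 + 1 * (YY w I z)^2 + 0 * 1 + 0 * 1)"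
  proof (rule EI_insert2[OF insert(1,2)])
    fix z
    have e: "(YY w (insert i I) (z(i:=y)))^2 = (w i * y + YY w I z)\<^sup>2 * (0 * y\<^sup>2 + 1)" for y
      using insert(1,2) by (simp add: YY_upd)
    show "(\<integral>\<^sup>+y. ennreal (std_normal_density y * (YY w (insert i I) (z(i := y)))^2) \<partial>lborel) = ennreal ((w i)^2 * 1 + 1 * (YY w I z)^2 + 0 * 1 + 0 * 1)"
      unfolding e using mom_sym[of 0 1 "w i" "YY w I z"] by simp
  qed auto
  also have "\<dots> = ennreal ((w i)^2 * 1 + 1 * (\<Sum>b\<in>I. (w b)^2) + 0 * 1 + 0 * 1)"
    by (rule EI_lin4) (auto simp: EI_const insert intro: sum_nonneg)
  finally show ?case using insert by (simp add: algebra_simps)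
qed

lemma EI_Y2S: "finite I \<Longrightarrow> EI I (\<lambda>z. (YY w I z)^2 * SS I z) = ennreal ((real (card I) + 2) * (\<Sum>b\<in>I. (w b)^2))"
proof (induction I rule: finite_induct)
  case empty then show ?case by (simp add: YY_def SS_def EI_def)
next
  case (insert i I)
  have "EI (insert i I) (\<lambda>z. (YY w (insert i I) z)^2 * SS (insert i I) z)
      = EI I (\<lambda>z. (3 * (w i)^2) * 1 + (w i)^2 * SS I z + 1 * (YY w I z)^2 + 1 * ((YY w I z)^2 * SS I z))"
  proof (rule EI_insert2[OF insert(1,2)])
    fix z
    have e: "(YY w (insert i I) (z(i:=y)))^2 * SS (insert i I) (z(i:=y)) = (w i * y + YY w I z)\<^sup>2 * (1 * y\<^sup>2 + SS I z)" for y
      using insert(1,2) by (simp add: YY_upd SS_upd)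
    show "(\<integral>\<^sup>+y. ennreal (std_normal_density y * ((YY w (insert i I) (z(i := y)))^2 * SS (insert i I) (z(i:=y)))) \<partial>lborel)
       = ennreal ((3 * (w i)^2) * 1 + (w i)^2 * SS I z + 1 * (YY w I z)^2 + 1 * ((YY w I z)^2 * SS I z))"
      unfolding e using mom_sym[of 1 "SS I z" "w i" "YY w I z"] SS_nonneg[of I z] by (simp add: algebra_simps)
  qed (auto simp: SS_nonneg)
  also have "\<dots> = ennreal ((3 * (w i)^2) * 1 + (w i)^2 * real (card I) + 1 * (\<Sum>b\<in>I. (w b)^2) + 1 * ((real (card I) + 2) * (\<Sum>b\<in>I. (w b)^2)))"
    by (rule EI_lin4) (auto simp: SS_nonneg EI_const EI_S1 EI_Y2 insert intro!: sum_nonneg mult_nonneg_nonneg)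
  finally show ?case using insert by (simp add: algebra_simps)
qed

lemma T_inner: "(\<Sum>b\<in>Basis. z b *\<^sub>R b) \<bullet> c = z c" if "c \<in> (Basis :: 'a::euclidean_space set)" for z
  using that by (simp add: inner_sum_left inner_Basis if_distrib cong: if_cong)

lemma T_norm2: "(norm (\<Sum>b\<in>(Basis::'a::euclidean_space set). z b *\<^sub>R b))\<^sup>2 = SS Basis z"
proof -
  let ?v = "\<Sum>b\<in>(Basis::'a set). z b *\<^sub>R b"
  have "(norm ?v)\<^sup>2 = ?v \<bullet> ?v" by (rule power2_norm_eq_inner)
  also have "\<dots> = (\<Sum>b\<in>Basis. (?v \<bullet> b) * (?v \<bullet> b))" by (rule euclidean_inner)
  also have "\<dots> = SS Basis z" unfolding SS_def
    by (rule sum.cong) (auto simp: T_inner power2_eq_square)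
  finally show ?thesis .
qed

lemma T_g: "g \<bullet> (\<Sum>b\<in>(Basis::'a::euclidean_space set). z b *\<^sub>R b) = YY (\<lambda>b. g \<bullet> b) Basis z"
proof -
  let ?v = "\<Sum>b\<in>(Basis::'a set). z b *\<^sub>R b"
  have "g \<bullet> ?v = (\<Sum>b\<in>Basis. (g \<bullet> b) * (?v \<bullet> b))" by (rule euclidean_inner)
  also have "\<dots> = YY (\<lambda>b. g \<bullet> b) Basis z" unfolding YY_def
    by (rule sum.cong) (auto simp: T_inner)
  finally show ?thesis .
qed

lemma dens_eq: "(2 * pi) powr (- real DIM('a::euclidean_space) / 2) * exp (- (norm (\<Sum>b\<in>(Basis::'a set). z b *\<^sub>R b))\<^sup>2 / 2)
   = gp Basis z"
proof -
  have p: "(2 * pi) powr (- real DIM('a) / 2) = (\<Prod>b\<in>(Basis::'a set). 1 / sqrt (2*pi))"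
  proof -
    have "(2 * pi) powr (- real DIM('a) / 2) = inverse ((2*pi) powr (1/2 * real DIM('a)))"
      by (simp add: powr_minus[symmetric])
    also have "(2*pi) powr (1/2 * real DIM('a)) = sqrt (2*pi) ^ DIM('a)"
    proof -
      have "sqrt (2*pi) ^ DIM('a) = sqrt (2*pi) powr (real DIM('a))"
        by (rule powr_realpow[symmetric]) simp
      also have "\<dots> = ((2*pi) powr (1/2)) powr (real DIM('a))"
        by (simp add: powr_half_sqrt)
      also have "\<dots> = (2*pi) powr (1/2 * real DIM('a))"
        by (rule powr_powr)
      finally show ?thesis by simp
    qed
    finally show ?thesis by (simp add: power_one_over inverse_eq_divide)
  qed
  have e: "exp (- (norm (\<Sum>b\<in>(Basis::'a set). z b *\<^sub>R b))\<^sup>2 / 2) = (\<Prod>b\<in>Basis. exp (- (z b)\<^sup>2 / 2))"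
    unfolding T_norm2 SS_def by (simp add: exp_sum[symmetric] sum_negf sum_divide_distrib)
  show ?thesis
    unfolding gp_def std_normal_density_def p e prod.distrib[symmetric] ..
qed

lemma dens_meas[measurable]: "(\<lambda>u::'a::euclidean_space. ennreal ((2 * pi) powr (- real DIM('a) / 2) * exp (- (norm u)\<^sup>2 / 2))) \<in> borel_measurable borel"
  by measurable

lemma T_meas[measurable]: "(\<lambda>f. \<Sum>b\<in>(Basis::'a::euclidean_space set). f b *\<^sub>R b) \<in> Pi\<^sub>M Basis (\<lambda>_. lborel) \<rightarrow>\<^sub>M borel"
  by measurable

lemma gauss_int:
  fixes h :: "'a::euclidean_space \<Rightarrow> ennreal"
  assumes [measurable]: "h \<in> borel_measurable borel"
  shows "(\<integral>\<^sup>+u. h u \<partial>std_gaussian) = (\<integral>\<^sup>+z. ennreal (gp Basis z) * h (\<Sum>b\<in>Basis. z b *\<^sub>R b) \<partial>(Pi\<^sub>M Basis (\<lambda>_. lborel)))"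
proof -
  have "(\<integral>\<^sup>+u. h u \<partial>std_gaussian) = (\<integral>\<^sup>+u. ennreal ((2 * pi) powr (- real DIM('a) / 2) * exp (- (norm u)\<^sup>2 / 2)) * h u \<partial>lborel)"
    unfolding std_gaussian_def by (rule nn_integral_density) measurable
  also have "\<dots> = (\<integral>\<^sup>+u. ennreal ((2 * pi) powr (- real DIM('a) / 2) * exp (- (norm u)\<^sup>2 / 2)) * h u
      \<partial>distr (\<Pi>\<^sub>M b\<in>Basis. lborel) borel (\<lambda>f. \<Sum>b\<in>Basis. f b *\<^sub>R b))"
    by (simp only: lborel_eq[symmetric])
  also have "\<dots> = (\<integral>\<^sup>+z. ennreal ((2 * pi) powr (- real DIM('a) / 2) * exp (- (norm (\<Sum>b\<in>(Basis::'a set). z b *\<^sub>R b))\<^sup>2 / 2)) * h (\<Sum>b\<in>Basis. z b *\<^sub>R b) \<partial>(Pi\<^sub>M Basis (\<lambda>_. lborel)))"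
    by (rule nn_integral_distr) (rule T_meas, simp)
  also have "\<dots> = (\<integral>\<^sup>+z. ennreal (gp Basis z) * h (\<Sum>b\<in>Basis. z b *\<^sub>R b) \<partial>(Pi\<^sub>M Basis (\<lambda>_. lborel)))"
    by (simp only: dens_eq)
  finally show ?thesis .
qed

lemma gauss_EI:
  fixes H :: "'a::euclidean_space \<Rightarrow> real"
  assumes [measurable]: "H \<in> borel_measurable borel" and "\<And>u. 0 \<le> H u"
  shows "(\<integral>\<^sup>+u. ennreal (H u) \<partial>std_gaussian) = EI Basis (\<lambda>z. H (\<Sum>b\<in>Basis. z b *\<^sub>R b))"
proof -
  have "(\<integral>\<^sup>+u. ennreal (H u) \<partial>std_gaussian) = (\<integral>\<^sup>+z. ennreal (gp Basis z) * ennreal (H (\<Sum>b\<in>Basis. z b *\<^sub>R b)) \<partial>(Pi\<^sub>M Basis (\<lambda>_. lborel)))"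
    by (rule gauss_int) measurable
  also have "\<dots> = EI Basis (\<lambda>z. H (\<Sum>b\<in>Basis. z b *\<^sub>R b))"
    unfolding EI_def by (rule nn_integral_cong) (simp add: ennreal_mult gp_nonneg assms(2))
  finally show ?thesis .
qed

lemma gauss_m2: "(\<integral>\<^sup>+u. ennreal ((norm u)^2) \<partial>(std_gaussian :: 'a::euclidean_space measure)) = ennreal (real DIM('a))"
  by (subst gauss_EI) (auto simp: T_norm2 EI_S1)

lemma gauss_m4: "(\<integral>\<^sup>+u. ennreal (((norm u)^2)^2) \<partial>(std_gaussian :: 'a::euclidean_space measure)) = ennreal (real DIM('a) * (real DIM('a) + 2))"
  by (subst gauss_EI) (auto simp: T_norm2 EI_S2 simp del: power_even_eq)

lemma gauss_m6: "(\<integral>\<^sup>+u. ennreal (((norm u)^2)^3) \<partial>(std_gaussian :: 'a::euclidean_space measure)) = ennreal (real DIM('a) * (real DIM('a) + 2) * (real DIM('a) + 4))"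
  by (subst gauss_EI) (auto simp: T_norm2 EI_S3 simp del: power_even_eq)

lemma gauss_mg: "(\<integral>\<^sup>+u. ennreal ((g \<bullet> u)^2 * (norm u)^2) \<partial>(std_gaussian :: 'a::euclidean_space measure)) = ennreal ((real DIM('a) + 2) * (norm g)^2)"
proof -
  have "(\<Sum>b\<in>(Basis::'a set). (g \<bullet> b)^2) = (norm g)^2"
  proof -
    have "(norm g)^2 = g \<bullet> g" by (rule power2_norm_eq_inner)
    also have "\<dots> = (\<Sum>b\<in>Basis. (g \<bullet> b) * (g \<bullet> b))" by (rule euclidean_inner)
    finally show ?thesis by (simp add: power2_eq_square)
  qed
  then show ?thesis
    by (subst gauss_EI) (auto simp: T_norm2 T_g EI_Y2S)
qed

lemma sq_le: "- a \<le> (x::real) \<Longrightarrow> x \<le> a \<Longrightarrow> x\<^sup>2 \<le> a\<^sup>2"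
proof -
  assume "- a \<le> x" "x \<le> a"
  then have "0 \<le> (a - x) * (a + x)" by (intro mult_nonneg_nonneg) auto
  then show ?thesis by (simp add: algebra_simps power2_eq_square)
qed

lemma noise:
  fixes D :: "real measure"
  assumes D_prob: "prob_space D" and D_sets: "sets D = sets borel"
    and supp: "AE v in D. v \<in> {-a..a}"
    and mean: "(\<integral>v. v \<partial>D) = 0"
    and var: "(\<integral>v. (v - (\<integral>w. w \<partial>D))\<^sup>2 \<partial>D) = \<sigma>\<^sup>2"
    and r: "0 \<le> r"
  shows "(\<integral>\<^sup>+v. ennreal ((p + q * v)\<^sup>2 + r) \<partial>D) = ennreal (p\<^sup>2 + q\<^sup>2 * \<sigma>\<^sup>2 + r)"
proof -
  interpret prob_space D by (rule D_prob)
  have mD[measurable]: "h \<in> borel_measurable D" if "h \<in> borel_measurable borel" for h :: "real \<Rightarrow> real"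
    by (subst measurable_cong_sets[OF D_sets refl]) (rule that)
  have b1: "AE v in D. norm v \<le> a" using supp by (rule eventually_mono) auto
  have b2: "AE v in D. norm (v\<^sup>2) \<le> a\<^sup>2" using supp
    by (rule eventually_mono) (auto intro!: sq_le)
  have i1: "integrable D (\<lambda>v. v)"
    by (rule integrable_const_bound[OF b1]) measurable
  have i2: "integrable D (\<lambda>v. v\<^sup>2)"
    by (rule integrable_const_bound[OF b2]) measurable
  have v2: "(\<integral>v. v\<^sup>2 \<partial>D) = \<sigma>\<^sup>2" using var mean by simp
  have e: "(\<lambda>v. (p + q * v)\<^sup>2 + r) = (\<lambda>v. (p\<^sup>2 + r) + (2*p*q) * v + q\<^sup>2 * v\<^sup>2)"
    by (auto simp: power2_eq_square algebra_simps)
  have ii: "integrable D (\<lambda>v. (p\<^sup>2 + r) + (2*p*q) * v + q\<^sup>2 * v\<^sup>2)"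
    using i1 i2 by auto
  have "(\<integral>\<^sup>+v. ennreal ((p + q * v)\<^sup>2 + r) \<partial>D) = ennreal (\<integral>v. (p + q * v)\<^sup>2 + r \<partial>D)"
    by (rule nn_integral_eq_integral) (use ii e r in auto)
  also have "(\<integral>v. (p + q * v)\<^sup>2 + r \<partial>D) = p\<^sup>2 + q\<^sup>2 * \<sigma>\<^sup>2 + r"
    unfolding e using i1 i2 mean v2 by (simp add: prob_space)
  finally show ?thesis .
qed

lemma inner_v1:
  fixes D :: "real measure"
  assumes D_prob: "prob_space D" and D_sets: "sets D = sets borel"
    and a_lt: "a < 1" and supp: "AE v in D. v \<in> {-a..a}"
    and mean: "(\<integral>v. v \<partial>D) = 0"
    and inv_b: "(\<integral>v. 1 / (1 + v) \<partial>D) \<le> b"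
    and T: "0 \<le> T1" "0 \<le> T2" "0 \<le> T3" "0 \<le> T4"
    and Q: "\<And>v. v \<in> {-a..a} \<Longrightarrow> Q v \<le> T1 + (1 + v) * T2 + T3 * (1 / (1 + v)) + T4"
  shows "(\<integral>\<^sup>+v. ennreal (Q v) \<partial>D) \<le> ennreal (T1 + T2 + b * T3 + T4)"
proof -
  interpret prob_space D by (rule D_prob)
  have mD[measurable]: "h \<in> borel_measurable D" if "h \<in> borel_measurable borel" for h :: "real \<Rightarrow> real"
    by (subst measurable_cong_sets[OF D_sets refl]) (rule that)
  have b1: "AE v in D. norm v \<le> a" using supp by (rule eventually_mono) auto
  have b2: "AE v in D. norm (1 / (1 + v)) \<le> 1 / (1 - a)" using supp
  proof (rule eventually_mono)
    fix v assume "v \<in> {-a..a}"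
    then have "1 - a \<le> 1 + v" "0 < 1 - a" using a_lt by auto
    then show "norm (1 / (1 + v)) \<le> 1 / (1 - a)"
      by (auto simp: divide_simps)
  qed
  have i1: "integrable D (\<lambda>v. v)"
    by (rule integrable_const_bound[OF b1]) measurable
  have i2: "integrable D (\<lambda>v. 1 / (1 + v))"
    by (rule integrable_const_bound[OF b2]) measurable
  let ?h = "\<lambda>v. T1 + (1 + v) * T2 + T3 * (1 / (1 + v)) + T4"
  have i3: "integrable D (\<lambda>v. 1 + v)"
    by (intro Bochner_Integration.integrable_add integrable_const i1)
  have ih: "integrable D ?h"
    by (intro Bochner_Integration.integrable_add integrable_const integrable_mult_left integrable_mult_right i3 i2)
  have "(\<integral>\<^sup>+v. ennreal (Q v) \<partial>D) \<le> (\<integral>\<^sup>+v. ennreal (?h v) \<partial>D)"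
  proof (rule nn_integral_mono_AE)
    show "AE v in D. ennreal (Q v) \<le> ennreal (?h v)" using supp
      by (rule eventually_mono) (intro ennreal_leI Q)
  qed
  also have "\<dots> = ennreal (\<integral>v. ?h v \<partial>D)"
  proof (rule nn_integral_eq_integral[OF ih])
    show "AE v in D. 0 \<le> ?h v" using supp
    proof (rule eventually_mono)
      fix v assume "v \<in> {-a..a}"
      then have "0 < 1 + v" using a_lt by auto
      then have "0 \<le> (1 + v) * T2" "0 \<le> T3 * (1 / (1 + v))" using T by auto
      then show "0 \<le> ?h v" using T by linarith
    qed
  qed
  also have "(\<integral>v. ?h v \<partial>D) = T1 + T2 + T3 * (\<integral>v. 1 / (1 + v) \<partial>D) + T4"
  proof -
    have "(\<integral>v. ?h v \<partial>D) = (\<integral>v. T1 + (1 + v) * T2 + T3 * (1 / (1 + v)) \<partial>D) + (\<integral>v. T4 \<partial>D)"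
      by (rule Bochner_Integration.integral_add) (intro Bochner_Integration.integrable_add integrable_const integrable_mult_left integrable_mult_right i3 i2)+
    also have "(\<integral>v. T1 + (1 + v) * T2 + T3 * (1 / (1 + v)) \<partial>D) = (\<integral>v. T1 + (1 + v) * T2 \<partial>D) + (\<integral>v. T3 * (1 / (1 + v)) \<partial>D)"
      by (rule Bochner_Integration.integral_add) (intro Bochner_Integration.integrable_add integrable_const integrable_mult_left integrable_mult_right i3 i2)+
    also have "(\<integral>v. T1 + (1 + v) * T2 \<partial>D) = (\<integral>v. T1 \<partial>D) + (\<integral>v. (1 + v) * T2 \<partial>D)"
      by (rule Bochner_Integration.integral_add) (intro Bochner_Integration.integrable_add integrable_const integrable_mult_left integrable_mult_right i3 i2)+
    also have "(\<integral>v. (1 + v) * T2 \<partial>D) = (\<integral>v. 1 + v \<partial>D) * T2"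
      by (rule integral_mult_left_zero)
    also have "(\<integral>v. 1 + v \<partial>D) = (\<integral>v. 1 \<partial>D) + (\<integral>v. v \<partial>D)"
      by (rule Bochner_Integration.integral_add) (intro integrable_const i1)+
    also have "(\<integral>v. T3 * (1 / (1 + v)) \<partial>D) = T3 * (\<integral>v. 1 / (1 + v) \<partial>D)"
      by (rule integral_mult_right_zero)
    finally show ?thesis using mean by (simp add: prob_space)
  qed
  also have "\<dots> \<le> T1 + T2 + b * T3 + T4"
    using inv_b T by (simp add: mult.commute mult_left_mono)
  finally show ?thesis by (simp add: ennreal_leI)
qed

lemma lin4:
  fixes M :: "'b measure"
  assumes [measurable]: "h1 \<in> borel_measurable M" "h2 \<in> borel_measurable M"
    "h3 \<in> borel_measurable M" "h4 \<in> borel_measurable M"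
    and hp: "\<And>z. 0 \<le> h1 z" "\<And>z. 0 \<le> h2 z" "\<And>z. 0 \<le> h3 z" "\<And>z. 0 \<le> h4 z"
    and cp: "0 \<le> a" "0 \<le> b" "0 \<le> c" "0 \<le> d"
    and v: "(\<integral>\<^sup>+z. ennreal (h1 z) \<partial>M) = ennreal x1" "(\<integral>\<^sup>+z. ennreal (h2 z) \<partial>M) = ennreal x2"
      "(\<integral>\<^sup>+z. ennreal (h3 z) \<partial>M) = ennreal x3" "(\<integral>\<^sup>+z. ennreal (h4 z) \<partial>M) = ennreal x4"
    and xp: "0 \<le> x1" "0 \<le> x2" "0 \<le> x3" "0 \<le> x4"
  shows "(\<integral>\<^sup>+z. ennreal (a * h1 z + b * h2 z + c * h3 z + d * h4 z) \<partial>M) = ennreal (a*x1 + b*x2 + c*x3 + d*x4)"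
proof -
  have "(\<integral>\<^sup>+z. ennreal (a * h1 z + b * h2 z + c * h3 z + d * h4 z) \<partial>M)
     = (\<integral>\<^sup>+z. ennreal a * ennreal (h1 z) + ennreal b * ennreal (h2 z) + ennreal c * ennreal (h3 z) + ennreal d * ennreal (h4 z) \<partial>M)"
  proof (rule nn_integral_cong)
    fix z
    have p: "0 \<le> a * h1 z" "0 \<le> b * h2 z" "0 \<le> c * h3 z" "0 \<le> d * h4 z"
      using hp cp by auto
    have "ennreal (a * h1 z + b * h2 z + c * h3 z + d * h4 z) = ennreal (a * h1 z) + ennreal (b * h2 z) + ennreal (c * h3 z) + ennreal (d * h4 z)"
      using p by (simp add: ennreal_plus[symmetric] del: ennreal_plus)
    also have "\<dots> = ennreal a * ennreal (h1 z) + ennreal b * ennreal (h2 z) + ennreal c * ennreal (h3 z) + ennreal d * ennreal (h4 z)"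
      using hp cp by (simp add: ennreal_mult)
    finally show "ennreal (a * h1 z + b * h2 z + c * h3 z + d * h4 z) = ennreal a * ennreal (h1 z) + ennreal b * ennreal (h2 z) + ennreal c * ennreal (h3 z) + ennreal d * ennreal (h4 z)" .
  qed
  also have "\<dots> = ennreal a * ennreal x1 + ennreal b * ennreal x2 + ennreal c * ennreal x3 + ennreal d * ennreal x4"
    by (simp add: nn_integral_add nn_integral_cmult v)
  also have "\<dots> = ennreal (a*x1 + b*x2 + c*x3 + d*x4)"
    using cp xp by (simp add: ennreal_mult[symmetric] ennreal_plus[symmetric] add_nonneg_nonneg mult_nonneg_nonneg del: ennreal_plus)
  finally show ?thesis .
qed

lemma pt_bound:
  fixes m2 N2 tsg dl Fp fx G2 L1 L0 :: real
  assumes m2: "0 < m2" and N2: "0 \<le> N2" and tsg: "0 \<le> tsg"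
    and D1: "dl\<^sup>2 \<le> 2*m2*G2 + L1\<^sup>2/2*m2\<^sup>2*N2\<^sup>2"
    and D2: "Fp\<^sup>2 \<le> 2*fx\<^sup>2 + 2*dl\<^sup>2"
    and D3: "dl\<^sup>2 \<le> L0\<^sup>2*m2*N2"
  shows "N2/m2 * (dl\<^sup>2 + Fp\<^sup>2* tsg + fx\<^sup>2* tsg) \<le> 2*(G2*N2) + L1\<^sup>2/2*m2*N2^3 + 3* tsg*fx\<^sup>2*N2/m2 + 2* tsg*L0\<^sup>2*N2\<^sup>2"
proof -
  have a: "Fp\<^sup>2* tsg \<le> (2*fx\<^sup>2 + 2*dl\<^sup>2)* tsg" using D2 tsg by (rule mult_right_mono)
  have b: "2*dl\<^sup>2* tsg \<le> 2*(L0\<^sup>2*m2*N2)* tsg" using D3 tsg by (simp add: mult_right_mono)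
  have "dl\<^sup>2 + Fp\<^sup>2* tsg + fx\<^sup>2* tsg \<le> (2*m2*G2 + L1\<^sup>2/2*m2\<^sup>2*N2\<^sup>2) + 2*(L0\<^sup>2*m2*N2)* tsg + 3*fx\<^sup>2* tsg"
    using a b D1 by (simp add: algebra_simps)
  then have "N2/m2 * (dl\<^sup>2 + Fp\<^sup>2* tsg + fx\<^sup>2* tsg) \<le> N2/m2 * ((2*m2*G2 + L1\<^sup>2/2*m2\<^sup>2*N2\<^sup>2) + 2*(L0\<^sup>2*m2*N2)* tsg + 3*fx\<^sup>2* tsg)"
    using m2 N2 by (intro mult_left_mono) auto
  also have "\<dots> = 2*(G2*N2) + L1\<^sup>2/2*m2*N2^3 + 3* tsg*fx\<^sup>2*N2/m2 + 2* tsg*L0\<^sup>2*N2\<^sup>2"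
    using m2 by (simp add: field_simps power2_eq_square power3_eq_cube)
  finally show ?thesis .
qed

lemma sq_bound: "\<bar>r\<bar> \<le> B \<Longrightarrow> r\<^sup>2 \<le> B\<^sup>2" for r B :: real
  by (metis abs_ge_zero abs_le_square_iff abs_of_nonneg order_trans)

lemma sum_sq: "(p + q)\<^sup>2 \<le> 2*p\<^sup>2 + 2*q\<^sup>2" for p q :: real
proof -
  have "0 \<le> (p - q)\<^sup>2" by simp
  then show ?thesis by (simp add: power2_eq_square algebra_simps)
qed

lemma meas4:
  fixes f :: "'a::euclidean_space \<Rightarrow> real"
  assumes [measurable]: "f \<in> borel_measurable borel"
  shows "(\<lambda>\<omega>. ennreal ((norm (zo_est n L1 \<sigma> f x (fst \<omega>) (fst (snd \<omega>)) (fst (snd (snd \<omega>))) (snd (snd (snd \<omega>)))))\<^sup>2))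
     \<in> borel_measurable (borel \<Otimes>\<^sub>M (borel \<Otimes>\<^sub>M (borel \<Otimes>\<^sub>M borel)))"
  unfolding zo_est_def noisy_def Let_def by measurable

lemma meas3:
  fixes f :: "'a::euclidean_space \<Rightarrow> real"
  assumes [measurable]: "f \<in> borel_measurable borel"
  shows "(\<lambda>\<omega>. ennreal ((norm (zo_est n L1 \<sigma> f x u (fst \<omega>) (fst (snd \<omega>)) (snd (snd \<omega>))))\<^sup>2))
     \<in> borel_measurable (borel \<Otimes>\<^sub>M (borel \<Otimes>\<^sub>M borel))"
  unfolding zo_est_def noisy_def Let_def by measurable

lemma meas2:
  fixes f :: "'a::euclidean_space \<Rightarrow> real"
  assumes [measurable]: "f \<in> borel_measurable borel"
  shows "(\<lambda>\<omega>. ennreal ((norm (zo_est n L1 \<sigma> f x u v1 (fst \<omega>) (snd \<omega>)))\<^sup>2))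
     \<in> borel_measurable (borel \<Otimes>\<^sub>M borel)"
  unfolding zo_est_def noisy_def Let_def by measurable


lemma final_ineq:
  fixes n G fa c L1 L0 \<sigma> b K :: real
  assumes n: "1 \<le> n" and G: "0 \<le> G" and fa: "0 < fa" and c: "0 < c" and L1: "0 < L1"
    and s: "0 < \<sigma>" and b: "0 \<le> b" and K: "0 < K"
    and cK: "c\<^sup>2 * L1 * K = 4 * \<sigma> * sqrt n"
  shows "2*((n+2)*G) + (L1\<^sup>2/2*c\<^sup>2*fa)*(n*(n+2)*(n+4)) + (b*(3*\<sigma>\<^sup>2*fa/c\<^sup>2))*n + (2*\<sigma>\<^sup>2*L0\<^sup>2)*(n*(n+2))
    \<le> 2*(n+4)*G + (1/2*c\<^sup>2*L1\<^sup>2*(n+6)^3 + (1+b)*L1*\<sigma>*(sqrt n * K))*fa + 3*L0\<^sup>2*\<sigma>\<^sup>2*(n+4)\<^sup>2"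
proof -
  have P1: "2*((n+2)*G) \<le> 2*(n+4)*G"
  proof -
    have "(2*(n+2))*G \<le> (2*(n+4))*G" using G by (intro mult_right_mono) auto
    then show ?thesis by (simp add: algebra_simps)
  qed
  have poly: "n*(n+2)*(n+4) \<le> (n+6)^3" using n by (simp add: power3_eq_cube algebra_simps)
  have P2: "(L1\<^sup>2/2*c\<^sup>2*fa)*(n*(n+2)*(n+4)) \<le> (L1\<^sup>2/2*c\<^sup>2*fa)*((n+6)^3)"
    using poly fa by (intro mult_left_mono) auto
  define r where "r = sqrt n"
  have r: "0 < r" "n = r\<^sup>2" using n unfolding r_def by auto
  have c2: "c\<^sup>2 = 4 * \<sigma> * r / (L1 * K)" using cK L1 K unfolding r_def by (simp add: field_simps)
  have P3: "(b*(3*\<sigma>\<^sup>2*fa/c\<^sup>2))*n = 3/4 * b * (L1*\<sigma>*(r * K)*fa)"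
    unfolding c2 using r s L1 K by (simp add: field_simps power2_eq_square)
  have P3': "3/4 * b * (L1*\<sigma>*(r * K)*fa) \<le> (1+b) * (L1*\<sigma>*(r * K)*fa)"
    using b L1 s r K fa by (intro mult_right_mono) auto
  have P4: "(2*\<sigma>\<^sup>2*L0\<^sup>2)*(n*(n+2)) \<le> 3*L0\<^sup>2*\<sigma>\<^sup>2*(n+4)\<^sup>2"
  proof -
    have "2*(n*(n+2)) \<le> 3*(n+4)\<^sup>2" using n by (simp add: power2_eq_square algebra_simps)
    then have "(\<sigma>\<^sup>2*L0\<^sup>2)*(2*(n*(n+2))) \<le> (\<sigma>\<^sup>2*L0\<^sup>2)*(3*(n+4)\<^sup>2)" by (intro mult_left_mono) auto
    then show ?thesis by (simp add: algebra_simps)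
  qed
  have "(1/2*c\<^sup>2*L1\<^sup>2*(n+6)^3 + (1+b)*L1*\<sigma>*(sqrt n * K))*fa = (L1\<^sup>2/2*c\<^sup>2*fa)*((n+6)^3) + (1+b) * (L1*\<sigma>*(r * K)*fa)"
    unfolding r_def by (simp add: algebra_simps)
  then show ?thesis using P1 P2 P3 P3' P4 by linarith
qed

theorem lemma4:
  fixes f :: "'a::euclidean_space \<Rightarrow> real" and df :: "'a \<Rightarrow> 'a"
    and D :: "real measure" and L0 L1 a b \<sigma> :: real and x :: 'a
  assumes convex: "convex_on UNIV f"
    and grad: "\<And>y. GDERIV f y :> df y"
    and grad_cont: "continuous_on UNIV df"
    and lip0: "\<And>y z. \<bar>f y - f z\<bar> \<le> L0 * norm (y - z)"
    and lip1: "\<And>y z. norm (df y - df z) \<le> L1 * norm (y - z)"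
    and D_prob: "prob_space D" and D_sets: "sets D = sets borel"
    and a_lt: "a < 1" and supp: "AE v in D. v \<in> {-a..a}"
    and mean: "(\<integral>v. v \<partial>D) = 0"
    and var: "(\<integral>v. (v - (\<integral>w. w \<partial>D))\<^sup>2 \<partial>D) = \<sigma>\<^sup>2" and sigma_pos: "\<sigma> > 0"
    and inv_b: "(\<integral>v. 1 / (1 + v) \<partial>D) \<le> b"
    and fx: "f x \<noteq> 0"
  shows "(\<integral>\<^sup>+ \<omega>. ennreal ((norm (zo_est (real DIM('a)) L1 \<sigma> f x (fst \<omega>)
              (fst (snd \<omega>)) (fst (snd (snd \<omega>))) (snd (snd (snd \<omega>)))))\<^sup>2)
           \<partial>(std_gaussian \<Otimes>\<^sub>M (D \<Otimes>\<^sub>M (D \<Otimes>\<^sub>M D))))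
         \<le> ennreal (2 * (real DIM('a) + 4) * (norm (df x))\<^sup>2
                    + C5 (real DIM('a)) L1 \<sigma> b * \<bar>f x\<bar> + C6 (real DIM('a)) L0 \<sigma>)"
proof -
  interpret D: prob_space D by (rule D_prob)
  define n where "n = real DIM('a)"
  define c where "c = C4 n L1 \<sigma>"
  define g where "g = df x"
  define fa where "fa = \<bar>f x\<bar>"
  have n1: "1 \<le> n" unfolding n_def using DIM_positive[where 'a='a] by linarith
  have fa_pos: "0 < fa" using fx unfolding fa_def by simp
  have cont: "continuous_on UNIV f"
  proof (rule continuous_at_imp_continuous_on, intro ballI)
    fix y :: 'a
    show "isCont f y" using grad[of y] unfolding gderiv_def by (rule has_derivative_continuous)
  qed
  have fm[measurable]: "f \<in> borel_measurable borel" using cont by (rule borel_measurable_continuous_onI)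
  have L1_nonneg: "0 \<le> L1"
  proof -
    obtain e :: 'a where e: "e \<in> Basis" using nonempty_Basis by blast
    have "0 \<le> norm (df e - df 0)" by simp
    also have "\<dots> \<le> L1 * norm (e - 0)" by (rule lip1)
    finally show ?thesis using e by simp
  qed
  have b_nonneg: "0 \<le> b"
  proof -
    have "0 \<le> (\<integral>v. 1 / (1 + v) \<partial>D)"
    proof (rule integral_nonneg_AE)
      show "AE v in D. 0 \<le> 1 / (1 + v)" using supp
        by (rule eventually_mono) (use a_lt in auto)
    qed
    then show ?thesis using inv_b by linarith
  qed
  have c_nonneg: "0 \<le> c" unfolding c_def C4_def by simp
  define \<Psi> where "\<Psi> = (\<lambda>u v1 v2 v3. ennreal ((norm (zo_est n L1 \<sigma> f x u v1 v2 v3))\<^sup>2))"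
  have goal_eq: "(\<integral>\<^sup>+ \<omega>. ennreal ((norm (zo_est (real DIM('a)) L1 \<sigma> f x (fst \<omega>)
              (fst (snd \<omega>)) (fst (snd (snd \<omega>))) (snd (snd (snd \<omega>)))))\<^sup>2)
           \<partial>(std_gaussian \<Otimes>\<^sub>M (D \<Otimes>\<^sub>M (D \<Otimes>\<^sub>M D))))
     = (\<integral>\<^sup>+ \<omega>. \<Psi> (fst \<omega>) (fst (snd \<omega>)) (fst (snd (snd \<omega>))) (snd (snd (snd \<omega>))) \<partial>(std_gaussian \<Otimes>\<^sub>M (D \<Otimes>\<^sub>M (D \<Otimes>\<^sub>M D))))"
    unfolding \<Psi>_def n_def ..
  show ?thesis
  proof (cases "c = 0")
    case True
    have "\<Psi> u v1 v2 v3 = 0" for u v1 v2 v3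
      unfolding \<Psi>_def zo_est_def Let_def c_def[symmetric] True by simp
    then show ?thesis unfolding goal_eq by simp
  next
    case False
    then have c_pos: "0 < c" using c_nonneg by simp
    have L1_pos: "0 < L1"
    proof (rule ccontr)
      assume "\<not> 0 < L1"
      then have "L1 = 0" using L1_nonneg by simp
      then have "c = 0" unfolding c_def C4_def by simp
      then show False using c_pos by simp
    qed
    define mu where "mu = (\<lambda>v1::real. c * sqrt \<bar>f x * (1 + v1)\<bar>)"
    define Fp where "Fp = (\<lambda>u v1. f (x + mu v1 *\<^sub>R u))"
    define Q where "Q = (\<lambda>u v1. (norm u)\<^sup>2/(mu v1)\<^sup>2 * ((Fp u v1 - f x)\<^sup>2 + (Fp u v1)\<^sup>2*\<sigma>\<^sup>2 + (f x)\<^sup>2*\<sigma>\<^sup>2))"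
    have zo: "(norm (zo_est n L1 \<sigma> f x u v1 v2 v3))\<^sup>2 = (norm u)\<^sup>2/(mu v1)\<^sup>2 * (((Fp u v1 - f x + Fp u v1 * v2) + (- f x) * v3)\<^sup>2 + 0)"
      for u v1 v2 v3
    proof -
      have "zo_est n L1 \<sigma> f x u v1 v2 v3 = ((Fp u v1 * (1 + v2) - f x * (1 + v3)) / mu v1) *\<^sub>R u"
        unfolding zo_est_def noisy_def Let_def c_def[symmetric] mu_def Fp_def by simp
      then have "(norm (zo_est n L1 \<sigma> f x u v1 v2 v3))\<^sup>2 = ((Fp u v1 * (1 + v2) - f x * (1 + v3)) / mu v1)\<^sup>2 * (norm u)\<^sup>2"
        by (simp only: norm_scaleR power_mult_distrib power2_abs)
      also have "\<dots> = (norm u)\<^sup>2/(mu v1)\<^sup>2 * (((Fp u v1 - f x + Fp u v1 * v2) + (- f x) * v3)\<^sup>2 + 0)"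
        by (simp add: power_divide algebra_simps)
      finally show ?thesis .
    qed
    have inner: "(\<integral>\<^sup>+v2. \<integral>\<^sup>+v3. \<Psi> u v1 v2 v3 \<partial>D \<partial>D) = ennreal (Q u v1)" for u v1
    proof -
      have K0: "0 \<le> (norm u)\<^sup>2/(mu v1)\<^sup>2" by simp
      have "(\<integral>\<^sup>+v2. \<integral>\<^sup>+v3. \<Psi> u v1 v2 v3 \<partial>D \<partial>D)
          = (\<integral>\<^sup>+v2. ennreal ((norm u)\<^sup>2/(mu v1)\<^sup>2) * (\<integral>\<^sup>+v3. ennreal (((Fp u v1 - f x + Fp u v1 * v2) + (- f x) * v3)\<^sup>2 + 0) \<partial>D) \<partial>D)"
      proof (rule nn_integral_cong)
        fix v2
        have "(\<integral>\<^sup>+v3. \<Psi> u v1 v2 v3 \<partial>D) = (\<integral>\<^sup>+v3. ennreal ((norm u)\<^sup>2/(mu v1)\<^sup>2) * ennreal (((Fp u v1 - f x + Fp u v1 * v2) + (- f x) * v3)\<^sup>2 + 0) \<partial>D)"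
          unfolding \<Psi>_def zo by (rule nn_integral_cong) (rule ennreal_mult[OF K0], simp)
        also have "\<dots> = ennreal ((norm u)\<^sup>2/(mu v1)\<^sup>2) * (\<integral>\<^sup>+v3. ennreal (((Fp u v1 - f x + Fp u v1 * v2) + (- f x) * v3)\<^sup>2 + 0) \<partial>D)"
          by (rule nn_integral_cmult) (simp add: measurable_cong_sets[OF D_sets refl])
        finally show "(\<integral>\<^sup>+v3. \<Psi> u v1 v2 v3 \<partial>D) = ennreal ((norm u)\<^sup>2/(mu v1)\<^sup>2) * (\<integral>\<^sup>+v3. ennreal (((Fp u v1 - f x + Fp u v1 * v2) + (- f x) * v3)\<^sup>2 + 0) \<partial>D)" .
      qed
      also have "\<dots> = (\<integral>\<^sup>+v2. ennreal ((norm u)\<^sup>2/(mu v1)\<^sup>2) * ennreal ((Fp u v1 - f x + Fp u v1 * v2)\<^sup>2 + (f x)\<^sup>2 * \<sigma>\<^sup>2) \<partial>D)"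
        by (subst noise[OF D_prob D_sets supp mean var]) simp_all
      also have "\<dots> = ennreal ((norm u)\<^sup>2/(mu v1)\<^sup>2) * (\<integral>\<^sup>+v2. ennreal (((Fp u v1 - f x) + Fp u v1 * v2)\<^sup>2 + (f x)\<^sup>2 * \<sigma>\<^sup>2) \<partial>D)"
        by (rule nn_integral_cmult) (simp add: measurable_cong_sets[OF D_sets refl])
      also have "\<dots> = ennreal ((norm u)\<^sup>2/(mu v1)\<^sup>2) * ennreal ((Fp u v1 - f x)\<^sup>2 + (Fp u v1)\<^sup>2 * \<sigma>\<^sup>2 + (f x)\<^sup>2 * \<sigma>\<^sup>2)"
        by (subst noise[OF D_prob D_sets supp mean var]) simp_all
      also have "\<dots> = ennreal (Q u v1)"
        unfolding Q_def by (rule ennreal_mult[symmetric]) (use K0 in auto)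
      finally show ?thesis .
    qed
    define T1 where "T1 = (\<lambda>u::'a. 2*((g \<bullet> u)\<^sup>2*(norm u)\<^sup>2))"
    define T2 where "T2 = (\<lambda>u::'a. L1\<^sup>2/2*c\<^sup>2*fa*((norm u)\<^sup>2)^3)"
    define T3 where "T3 = (\<lambda>u::'a. 3*\<sigma>\<^sup>2*fa/c\<^sup>2*(norm u)\<^sup>2)"
    define T4 where "T4 = (\<lambda>u::'a. 2*\<sigma>\<^sup>2*L0\<^sup>2*((norm u)\<^sup>2)\<^sup>2)"
    have ptw: "Q u v1 \<le> T1 u + (1 + v1) * T2 u + T3 u * (1 / (1 + v1)) + T4 u" if v1: "v1 \<in> {-a..a}" for u v1
    proof -
      have pv: "0 < 1 + v1" using v1 a_lt by auto
      have pv': "1 + v1 \<noteq> 0" "v1 \<noteq> -1" using pv by auto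
      have abs_eq: "\<bar>f x * (1 + v1)\<bar> = fa * (1 + v1)" using pv unfolding fa_def by (simp add: abs_mult)
      have m2: "(mu v1)\<^sup>2 = c\<^sup>2 * fa * (1 + v1)"
        unfolding mu_def abs_eq using fa_pos pv by (simp add: power_mult_distrib)
      have m2pos: "0 < (mu v1)\<^sup>2" unfolding m2 using c_pos fa_pos pv by simp
      define h where "h = mu v1 *\<^sub>R u"
      have nh: "(norm h)\<^sup>2 = (mu v1)\<^sup>2 * (norm u)\<^sup>2" unfolding h_def by (simp add: power_mult_distrib)
      have gh: "df x \<bullet> h = mu v1 * (g \<bullet> u)" unfolding h_def g_def by simp
      have tay: "\<bar>Fp u v1 - f x - mu v1 * (g \<bullet> u)\<bar> \<le> L1 / 2 * ((mu v1)\<^sup>2 * (norm u)\<^sup>2)"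
        using taylor_bound[OF grad lip1, of x h] unfolding gh nh by (simp add: Fp_def h_def)
      have D1: "(Fp u v1 - f x)\<^sup>2 \<le> 2*(mu v1)\<^sup>2*(g \<bullet> u)\<^sup>2 + L1\<^sup>2/2*((mu v1)\<^sup>2)\<^sup>2*((norm u)\<^sup>2)\<^sup>2"
      proof -
        have "(Fp u v1 - f x)\<^sup>2 = (mu v1 * (g \<bullet> u) + (Fp u v1 - f x - mu v1 * (g \<bullet> u)))\<^sup>2" by simp
        also have "\<dots> \<le> 2*(mu v1 * (g \<bullet> u))\<^sup>2 + 2*(Fp u v1 - f x - mu v1 * (g \<bullet> u))\<^sup>2" by (rule sum_sq)
        also have "(Fp u v1 - f x - mu v1 * (g \<bullet> u))\<^sup>2 \<le> (L1 / 2 * ((mu v1)\<^sup>2 * (norm u)\<^sup>2))\<^sup>2"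
          by (rule sq_bound[OF tay])
        finally show ?thesis by (simp add: power_mult_distrib power2_eq_square field_simps)
      qed
      have D2: "(Fp u v1)\<^sup>2 \<le> 2*(f x)\<^sup>2 + 2*(Fp u v1 - f x)\<^sup>2"
        using sum_sq[of "f x" "Fp u v1 - f x"] by simp
      have D3: "(Fp u v1 - f x)\<^sup>2 \<le> L0\<^sup>2*(mu v1)\<^sup>2*(norm u)\<^sup>2"
      proof -
        have "\<bar>Fp u v1 - f x\<bar> \<le> L0 * norm h" using lip0[of "x + h" x] unfolding Fp_def h_def by simp
        then have "(Fp u v1 - f x)\<^sup>2 \<le> (L0 * norm h)\<^sup>2" by (rule sq_bound)
        then show ?thesis unfolding power_mult_distrib nh by (simp add: mult.assoc)
      qed
      have "Q u v1 \<le> 2*((g \<bullet> u)\<^sup>2*(norm u)\<^sup>2) + L1\<^sup>2/2*(mu v1)\<^sup>2*((norm u)\<^sup>2)^3 + 3*\<sigma>\<^sup>2*(f x)\<^sup>2*(norm u)\<^sup>2/(mu v1)\<^sup>2 + 2*\<sigma>\<^sup>2*L0\<^sup>2*((norm u)\<^sup>2)\<^sup>2"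
        unfolding Q_def by (rule pt_bound[OF m2pos _ _ D1 D2 D3]) auto
      also have "\<dots> = T1 u + (1 + v1) * T2 u + T3 u * (1 / (1 + v1)) + T4 u"
      proof -
        have fx2: "(f x)\<^sup>2 = fa\<^sup>2" unfolding fa_def by simp
        have e2: "L1\<^sup>2/2*(c\<^sup>2 * fa * (1 + v1))*((norm u)\<^sup>2)^3 = (1 + v1) * T2 u"
          unfolding T2_def by (simp add: algebra_simps)
        have e3: "3*\<sigma>\<^sup>2*fa\<^sup>2*(norm u)\<^sup>2/(c\<^sup>2 * fa * (1 + v1)) = T3 u * (1 / (1 + v1))"
        proof -
          have "3*\<sigma>\<^sup>2*fa\<^sup>2*(norm u)\<^sup>2/(c\<^sup>2 * fa * (1 + v1)) = (3*\<sigma>\<^sup>2*fa*(norm u)\<^sup>2) * fa / ((c\<^sup>2 * (1 + v1)) * fa)"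
            by (simp add: power2_eq_square mult_ac)
          also have "\<dots> = (3*\<sigma>\<^sup>2*fa*(norm u)\<^sup>2) / (c\<^sup>2 * (1 + v1))"
            using fa_pos by simp
          also have "\<dots> = T3 u * (1 / (1 + v1))"
            unfolding T3_def by simp
          finally show ?thesis .
        qed
        show ?thesis
          unfolding m2 fx2 e2 e3 T1_def T4_def by simp
      qed
      finally show ?thesis .
    qed
    have T_nonneg: "0 \<le> T1 u" "0 \<le> T2 u" "0 \<le> T3 u" "0 \<le> T4 u" for u
      unfolding T1_def T2_def T3_def T4_def using fa_pos c_pos by auto
    have sf2: "sigma_finite_measure (D \<Otimes>\<^sub>M D)" by (intro prob_space_imp_sigma_finite prob_space_pair D_prob)
    have sf3: "sigma_finite_measure (D \<Otimes>\<^sub>M (D \<Otimes>\<^sub>M D))" by (intro prob_space_imp_sigma_finite prob_space_pair D_prob)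
    have sfD: "sigma_finite_measure D" by (rule prob_space_imp_sigma_finite[OF D_prob])
    have G_sets: "sets (std_gaussian::'a measure) = sets borel" by (simp add: std_gaussian_def)
    have m4: "(\<lambda>\<omega>. \<Psi> (fst \<omega>) (fst (snd \<omega>)) (fst (snd (snd \<omega>))) (snd (snd (snd \<omega>)))) \<in> borel_measurable (std_gaussian \<Otimes>\<^sub>M (D \<Otimes>\<^sub>M (D \<Otimes>\<^sub>M D)))"
      unfolding \<Psi>_def
      by (subst measurable_cong_sets[OF sets_pair_measure_cong[OF G_sets sets_pair_measure_cong[OF D_sets sets_pair_measure_cong[OF D_sets D_sets]]] refl]) (rule meas4[OF fm])
    have m3: "(\<lambda>\<omega>. \<Psi> u (fst \<omega>) (fst (snd \<omega>)) (snd (snd \<omega>))) \<in> borel_measurable (D \<Otimes>\<^sub>M (D \<Otimes>\<^sub>M D))" for u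
      unfolding \<Psi>_def
      by (subst measurable_cong_sets[OF sets_pair_measure_cong[OF D_sets sets_pair_measure_cong[OF D_sets D_sets]] refl]) (rule meas3[OF fm])
    have m2: "(\<lambda>\<omega>. \<Psi> u v1 (fst \<omega>) (snd \<omega>)) \<in> borel_measurable (D \<Otimes>\<^sub>M D)" for u v1
      unfolding \<Psi>_def
      by (subst measurable_cong_sets[OF sets_pair_measure_cong[OF D_sets D_sets] refl]) (rule meas2[OF fm])
    have "(\<integral>\<^sup>+\<omega>. \<Psi> (fst \<omega>) (fst (snd \<omega>)) (fst (snd (snd \<omega>))) (snd (snd (snd \<omega>))) \<partial>(std_gaussian \<Otimes>\<^sub>M (D \<Otimes>\<^sub>M (D \<Otimes>\<^sub>M D))))
        = (\<integral>\<^sup>+u. \<integral>\<^sup>+y. \<Psi> u (fst y) (fst (snd y)) (snd (snd y)) \<partial>(D \<Otimes>\<^sub>M (D \<Otimes>\<^sub>M D)) \<partial>std_gaussian)"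
      using sigma_finite_measure.nn_integral_fst[OF sf3 m4] by simp
    also have "\<dots> = (\<integral>\<^sup>+u. \<integral>\<^sup>+v1. ennreal (Q u v1) \<partial>D \<partial>std_gaussian)"
    proof (rule nn_integral_cong)
      fix u :: 'a
      have "(\<integral>\<^sup>+y. \<Psi> u (fst y) (fst (snd y)) (snd (snd y)) \<partial>(D \<Otimes>\<^sub>M (D \<Otimes>\<^sub>M D)))
          = (\<integral>\<^sup>+v1. \<integral>\<^sup>+y. \<Psi> u v1 (fst y) (snd y) \<partial>(D \<Otimes>\<^sub>M D) \<partial>D)"
        using sigma_finite_measure.nn_integral_fst[OF sf2 m3[of u]] by simp
      also have "\<dots> = (\<integral>\<^sup>+v1. \<integral>\<^sup>+v2. \<integral>\<^sup>+v3. \<Psi> u v1 v2 v3 \<partial>D \<partial>D \<partial>D)"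
      proof (rule nn_integral_cong)
        fix v1
        show "(\<integral>\<^sup>+y. \<Psi> u v1 (fst y) (snd y) \<partial>(D \<Otimes>\<^sub>M D)) = (\<integral>\<^sup>+v2. \<integral>\<^sup>+v3. \<Psi> u v1 v2 v3 \<partial>D \<partial>D)"
          using sigma_finite_measure.nn_integral_fst[OF sfD m2[of u v1]] by simp
      qed
      also have "\<dots> = (\<integral>\<^sup>+v1. ennreal (Q u v1) \<partial>D)"
        by (simp add: inner)
      finally show "(\<integral>\<^sup>+y. \<Psi> u (fst y) (fst (snd y)) (snd (snd y)) \<partial>(D \<Otimes>\<^sub>M (D \<Otimes>\<^sub>M D))) = (\<integral>\<^sup>+v1. ennreal (Q u v1) \<partial>D)" .
    qed
    also have "\<dots> \<le> (\<integral>\<^sup>+u. ennreal (T1 u + T2 u + b * T3 u + T4 u) \<partial>std_gaussian)"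
    proof (rule nn_integral_mono)
      fix u :: 'a
      show "(\<integral>\<^sup>+v1. ennreal (Q u v1) \<partial>D) \<le> ennreal (T1 u + T2 u + b * T3 u + T4 u)"
        by (rule inner_v1[OF D_prob D_sets a_lt supp mean inv_b T_nonneg ptw])
    qed
    also have "(\<integral>\<^sup>+u. ennreal (T1 u + T2 u + b * T3 u + T4 u) \<partial>std_gaussian)
        = (\<integral>\<^sup>+u. ennreal (2 * ((g \<bullet> u)\<^sup>2*(norm u)\<^sup>2) + (L1\<^sup>2/2*c\<^sup>2*fa) * (((norm u)\<^sup>2)^3) + (b*(3*\<sigma>\<^sup>2*fa/c\<^sup>2)) * (norm u)\<^sup>2 + (2*\<sigma>\<^sup>2*L0\<^sup>2) * (((norm u)\<^sup>2)\<^sup>2)) \<partial>std_gaussian)"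
      unfolding T1_def T2_def T3_def T4_def by (simp add: mult_ac)
    also have "\<dots> = ennreal (2 * ((n+2)*(norm g)\<^sup>2) + (L1\<^sup>2/2*c\<^sup>2*fa) * (n*(n+2)*(n+4)) + (b*(3*\<sigma>\<^sup>2*fa/c\<^sup>2)) * n + (2*\<sigma>\<^sup>2*L0\<^sup>2) * (n*(n+2)))"
    proof -
      have mG: "h \<in> borel_measurable std_gaussian" if "h \<in> borel_measurable borel" for h :: "'a \<Rightarrow> real"
        by (subst measurable_cong_sets[OF G_sets refl]) (rule that)
      have mA: "(\<lambda>u. (g \<bullet> u)\<^sup>2*(norm u)\<^sup>2) \<in> borel_measurable std_gaussian" by (rule mG) measurable
      have mB: "(\<lambda>u::'a. ((norm u)\<^sup>2)^3) \<in> borel_measurable std_gaussian" by (rule mG) measurable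
      have mC: "(\<lambda>u::'a. (norm u)\<^sup>2) \<in> borel_measurable std_gaussian" by (rule mG) measurable
      have mD: "(\<lambda>u::'a. ((norm u)\<^sup>2)\<^sup>2) \<in> borel_measurable std_gaussian" by (rule mG) measurable
      have c3: "0 \<le> b*(3*\<sigma>\<^sup>2*fa/c\<^sup>2)" using b_nonneg fa_pos c_pos by simp
      show ?thesis
        unfolding n_def
        by (rule lin4[OF mA mB mC mD _ _ _ _ _ _ c3 _ gauss_mg gauss_m6 gauss_m2 gauss_m4]) (use fa_pos in auto)
    qed
    also have "\<dots> \<le> ennreal (2 * (n + 4) * (norm g)\<^sup>2 + C5 n L1 \<sigma> b * fa + C6 n L0 \<sigma>)"
    proof (rule ennreal_leI)
      define K where "K = sqrt ((1 + 3*\<sigma>\<^sup>2)*(n+6)^3)"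
      have s3: "0 < 1 + 3 * \<sigma>\<^sup>2" by (intro add_pos_nonneg) auto
      have "0 < (1 + 3 * \<sigma>\<^sup>2) * (n + 6) ^ 3"
        using n1 s3 by (intro mult_pos_pos) auto
      then have Kpos: "0 < K" unfolding K_def by simp
      have X: "0 < 16 * \<sigma>\<^sup>2 * n / (L1\<^sup>2 * (1 + 3 * \<sigma>\<^sup>2) * (n + 6) ^ 3)"
        using n1 sigma_pos L1_pos s3 by (intro divide_pos_pos mult_pos_pos) auto
      have "c\<^sup>2 = sqrt (16 * \<sigma>\<^sup>2 * n / (L1\<^sup>2 * (1 + 3 * \<sigma>\<^sup>2) * (n + 6) ^ 3))"
      proof -
        let ?X = "16 * \<sigma>\<^sup>2 * n / (L1\<^sup>2 * (1 + 3 * \<sigma>\<^sup>2) * (n + 6) ^ 3)"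
        have "c\<^sup>2 = ?X powr (1/4) * ?X powr (1/4)" unfolding c_def C4_def by (simp add: power2_eq_square)
        also have "\<dots> = ?X powr (1/2)" by (simp add: powr_add[symmetric])
        also have "\<dots> = sqrt ?X" using X by (simp add: powr_half_sqrt)
        finally show ?thesis .
      qed
      also have "\<dots> = 4 * \<sigma> * sqrt n / (L1 * K)"
        unfolding K_def using sigma_pos L1_pos n1
        by (simp add: real_sqrt_divide real_sqrt_mult mult.assoc)
      finally have "c\<^sup>2 = 4 * \<sigma> * sqrt n / (L1 * K)" .
      then have cK: "c\<^sup>2 * L1 * K = 4 * \<sigma> * sqrt n" using L1_pos Kpos by (simp add: field_simps)
      have sq: "sqrt ((1 + 3 * \<sigma>\<^sup>2) * n * (n + 6) ^ 3) = sqrt n * K"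
        unfolding K_def by (simp add: real_sqrt_mult[symmetric] mult_ac)
      have C5: "C5 n L1 \<sigma> b = 1/2*c\<^sup>2*L1\<^sup>2*(n+6)^3 + (1+b)*L1*\<sigma>*(sqrt n * K)"
        unfolding C5_def c_def[symmetric] sq ..
      show "2 * ((n+2)*(norm g)\<^sup>2) + (L1\<^sup>2/2*c\<^sup>2*fa) * (n*(n+2)*(n+4)) + (b*(3*\<sigma>\<^sup>2*fa/c\<^sup>2)) * n + (2*\<sigma>\<^sup>2*L0\<^sup>2) * (n*(n+2))
          \<le> 2 * (n + 4) * (norm g)\<^sup>2 + C5 n L1 \<sigma> b * fa + C6 n L0 \<sigma>"
        unfolding C5 C6_def
        by (rule final_ineq[OF n1 _ fa_pos c_pos L1_pos sigma_pos b_nonneg Kpos cK]) simp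
    qed
    finally show ?thesis unfolding goal_eq g_def fa_def n_def .
  qed
qed

end
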